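(* Let $\mathcal{H}=\mathbb{C}^{d_1}$ with $d_1$ odd and $\mathcal{K}=\mathbb{C}^{d_2}$. Then every minimizer $U$ of $$\min\Big\{\frac1{d_1d_2}\operatorname{tr}\big[U\,\overline U^{T_2}\big]:\ U\in\mathcal{B}(\mathcal{H}\otimes\mathcal{K})\text{ unitary}\Big\}$$ has the property that $U\,\overline U^{T_2}$ is Hermitian.
   Context: The partial transpose $T_2$ is taken with respect to a fixed product basis, defined by linear extension of $(X\otimes Y)^{T_2}=X\otimes Y^T$; $\overline U$ is the entrywise complex conjugate, and $\overline U^{T_2}=(\overline U)^{T_2}$. *)

theory Defs
  imports "HOL-Analysis.Analysis"
begin

text \<open>Operators on H \<otimes> K = C^d1 \<otimes> C^d2, with the product basis indexed by pairs
  (i,k) in 'a \<times> 'b, where CARD('a) = d1 and CARD('b) = d2.\<close>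

definition entry_conj :: "complex^'n^'m \<Rightarrow> complex^'n^'m" where
  "entry_conj A = (\<chi> i j. cnj (A $ i $ j))"

definition conj_transpose :: "complex^'n^'m \<Rightarrow> complex^'m^'n" where
  "conj_transpose A = transpose (entry_conj A)"

definition unitary_mat :: "complex^'n^'n \<Rightarrow> bool" where
  "unitary_mat U \<longleftrightarrow> conj_transpose U ** U = mat 1 \<and> U ** conj_transpose U = mat 1"

definition hermitian_mat :: "complex^'n^'n \<Rightarrow> bool" where
  "hermitian_mat A \<longleftrightarrow> conj_transpose A = A"

text \<open>Partial transpose on the second tensor factor: linear extension of
  (X \<otimes> Y)^T2 = X \<otimes> Y^T, i.e. entry ((i,k),(j,l)) of X^T2 is entry ((i,l),(j,k)) of X.\<close>
definition partial_transpose2 :: "complex^('a::finite \<times> 'b::finite)^('a \<times> 'b) \<Rightarrow> complex^('a \<times> 'b)^('a \<times> 'b)" where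
  "partial_transpose2 X = (\<chi> p q. X $ (fst p, snd q) $ (fst q, snd p))"

text \<open>The objective (1/(d1 d2)) tr[U conj(U)^T2]; this trace is always real, so we take Re.\<close>
definition objective :: "complex^('a::finite \<times> 'b::finite)^('a \<times> 'b) \<Rightarrow> real" where
  "objective U = Re (trace (U ** partial_transpose2 (entry_conj U))) / (real CARD('a) * real CARD('b))"

end

theory Submission imports Defs begin

lemma matrix_add_rdistrib': "((A::'a::semiring_1^'n^'m) + B) ** C = A ** C + B ** C"
  by (vector matrix_matrix_mult_def sum.distrib[symmetric] field_simps)

lemma matrix_neg_right: "(A::'a::ring_1^'n^'m) ** (- B) = - (A ** B)"
  by (vector matrix_matrix_mult_def sum_negf[symmetric])

lemma matrix_neg_left: "(- A::'a::ring_1^'n^'m) ** B = - (A ** B)"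
  by (vector matrix_matrix_mult_def sum_negf[symmetric])

lemma ct_entry[simp]: "conj_transpose A $ i $ j = cnj (A $ j $ i)"
  by (simp add: conj_transpose_def entry_conj_def transpose_def)

lemma ec_entry[simp]: "entry_conj A $ i $ j = cnj (A $ i $ j)"
  by (simp add: entry_conj_def)

lemma ct_mult: "conj_transpose (A ** B) = conj_transpose B ** conj_transpose A"
  by (simp add: vec_eq_iff matrix_matrix_mult_def mult.commute)

lemma ct_add: "conj_transpose (A + B) = conj_transpose A + conj_transpose B"
  by (simp add: vec_eq_iff)

lemma ct_scaleR: "conj_transpose (r *\<^sub>R A) = r *\<^sub>R conj_transpose A"
  by (simp add: vec_eq_iff scaleR_conv_of_real[where 'a=complex])

lemma ct_mat1: "conj_transpose (mat 1) = mat 1"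
  by (simp add: vec_eq_iff mat_def)

lemma ct_neg: "conj_transpose (- A) = - conj_transpose A"
  by (simp add: vec_eq_iff)

definition beta :: "complex^('a::finite \<times> 'b::finite)^('a \<times> 'b) \<Rightarrow> complex^('a \<times> 'b)^('a \<times> 'b) \<Rightarrow> complex" where
  "beta A B = trace (A ** partial_transpose2 (entry_conj B))"

lemma beta_expand: "beta A B = (\<Sum>p\<in>UNIV. \<Sum>q\<in>UNIV. A $ p $ q * cnj (B $ (fst q, snd p) $ (fst p, snd q)))"
  by (simp add: beta_def trace_def matrix_matrix_mult_def partial_transpose2_def)

lemma beta_add_left: "beta (A + B) C = beta A C + beta B C"
  by (simp add: beta_expand distrib_right sum.distrib)
lemma beta_add_right: "beta C (A + B) = beta C A + beta C B"
  by (simp add: beta_expand distrib_left sum.distrib)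
lemma beta_scaleR_left: "beta (r *\<^sub>R A) C = of_real r * beta A C"
  by (simp add: beta_expand scaleR_conv_of_real[where 'a=complex] sum_distrib_left mult.assoc)
lemma beta_scaleR_right: "beta C (r *\<^sub>R A) = of_real r * beta C A"
  by (simp add: beta_expand scaleR_conv_of_real[where 'a=complex] sum_distrib_left mult_ac)

lemma beta_sym: "cnj (beta A B) = beta B A"
proof -
  let ?g = "\<lambda>(p::'a\<times>'b,q::'a\<times>'b). ((fst q, snd p), (fst p, snd q))"
  have "cnj (beta A B) = (\<Sum>x\<in>UNIV. cnj (A $ fst x $ snd x) * B $ (fst (snd x), snd (fst x)) $ (fst (fst x), snd (snd x)))"
    by (simp add: beta_expand sum.cartesian_product split_def)
  also have "\<dots> = (\<Sum>x\<in>UNIV. B $ fst x $ snd x * cnj (A $ (fst (snd x), snd (fst x)) $ (fst (fst x), snd (snd x))))"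
    by (rule sum.reindex_bij_witness[where i="?g" and j="?g"]) (auto simp: mult.commute)
  also have "\<dots> = beta B A"
    by (simp add: beta_expand sum.cartesian_product split_def)
  finally show ?thesis .
qed


lemma Q_mult:
  fixes X :: "complex^'n^'n"
  assumes X3: "X ** X ** X = - X" and h: "2 * c = s^2 + c^2"
  shows "(mat 1 + s *\<^sub>R X + c *\<^sub>R (X**X)) ** (mat 1 + (-s) *\<^sub>R X + c *\<^sub>R (X**X)) = mat 1"
proof -
  define Y where "Y = X ** X"
  have XY: "X ** Y = - X" using X3 by (simp add: Y_def matrix_mul_assoc)
  have YX: "Y ** X = - X" using X3 by (simp add: Y_def)
  have YY: "Y ** Y = - Y" using X3 by (simp add: Y_def matrix_mul_assoc matrix_neg_left)
  have e: "(mat 1 + s *\<^sub>R X + c *\<^sub>R Y) ** (mat 1 + (-s) *\<^sub>R X + c *\<^sub>R Y)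
     = mat 1 + (c + c - s * s - c * c) *\<^sub>R Y"
    unfolding matrix_add_ldistrib matrix_add_rdistrib' matrix_scalar_ac scalar_matrix_assoc[symmetric]
       XY YX YY matrix_mul_lid matrix_mul_rid
    apply (simp add: vec_eq_iff algebra_simps Y_def[symmetric] scaleR_conv_of_real[where 'a=complex])
    done
  have "c + c - s * s - c * c = 0" using h by (simp add: power2_eq_square)
  with e show ?thesis by (simp add: Y_def)
qed


lemma Re_beta_swap: "Re (beta A B) = Re (beta B A)"
  by (subst beta_sym[symmetric]) simp

lemma beta_quad:
  "Re (beta (U + s *\<^sub>R A + c *\<^sub>R B) (U + s *\<^sub>R A + c *\<^sub>R B)) =
    Re (beta U U) + 2 * s * Re (beta A U) + 2 * c * Re (beta B U) + s^2 * Re (beta A A)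
    + 2 * s * c * Re (beta A B) + c^2 * Re (beta B B)"
proof -
  have 1: "Re (beta U A) = Re (beta A U)" "Re (beta U B) = Re (beta B U)" "Re (beta B A) = Re (beta A B)"
    by (rule Re_beta_swap)+
  show ?thesis
    unfolding beta_add_left beta_add_right beta_scaleR_left beta_scaleR_right
    by (simp add: 1 power2_eq_square algebra_simps)
qed


lemma objective_beta: "objective V = Re (beta V V) / (real CARD('a) * real CARD('b))"
  for V :: "complex^('a::finite \<times> 'b::finite)^('a \<times> 'b)"
  by (simp add: objective_def beta_def)

lemma crit:
  fixes U X :: "complex^('a::finite \<times> 'b::finite)^('a \<times> 'b)"
  assumes "unitary_mat U"
    and min: "\<forall>V :: complex^('a \<times> 'b)^('a \<times> 'b). unitary_mat V \<longrightarrow> objective U \<le> objective V"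
    and Xa: "conj_transpose X = - X" and X3: "X ** X ** X = - X"
  shows "Re (trace (X ** (U ** partial_transpose2 (entry_conj U)))) = 0"
proof -
  define Y where "Y = X ** X"
  define D where "D = real CARD('a) * real CARD('b)"
  have Dpos: "D > 0" by (simp add: D_def)
  define A where "A = X ** U"
  define B where "B = Y ** U"
  define g where "g = (\<lambda>t::real. 2 * sin t * Re (beta A U) + 2 * (1 - cos t) * Re (beta B U)
      + (sin t)^2 * Re (beta A A) + 2 * sin t * (1 - cos t) * Re (beta A B) + (1 - cos t)^2 * Re (beta B B))"
  have gmin: "g 0 \<le> g t" for t
  proof -
    define s where "s = sin t"
    define c where "c = 1 - cos t"
    have h: "2 * c = s^2 + c^2" unfolding s_def c_def
      using sin_cos_squared_add[of t] by (simp add: power2_eq_square algebra_simps)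
    have h': "2 * c = (-s)^2 + c^2" using h by simp
    define Q where "Q = mat 1 + s *\<^sub>R X + c *\<^sub>R Y"
    have ctY: "conj_transpose Y = Y"
      by (simp add: Y_def ct_mult Xa matrix_neg_left matrix_neg_right)
    have ctQ: "conj_transpose Q = mat 1 + (-s) *\<^sub>R X + c *\<^sub>R Y"
      by (simp add: Q_def ct_add ct_scaleR ct_mat1 ctY Xa)
    have Q1: "Q ** conj_transpose Q = mat 1"
      unfolding ctQ unfolding Q_def Y_def by (rule Q_mult[OF X3 h])
    have Q2: "conj_transpose Q ** Q = mat 1"
      using Q_mult[OF X3 h'] unfolding ctQ unfolding Q_def Y_def by simp
    have uV: "unitary_mat (Q ** U)"
      using assms(1) Q1 Q2 unfolding unitary_mat_def ct_mult
      by (metis matrix_mul_assoc matrix_mul_lid)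
    have V: "Q ** U = U + s *\<^sub>R A + c *\<^sub>R B"
      by (simp add: Q_def A_def B_def matrix_add_rdistrib' scalar_matrix_assoc[symmetric])
    have "objective U \<le> objective (Q ** U)" using min uV by blast
    hence "Re (beta U U) / D \<le> Re (beta (U + s *\<^sub>R A + c *\<^sub>R B) (U + s *\<^sub>R A + c *\<^sub>R B)) / D"
      unfolding V objective_beta D_def .
    hence "Re (beta U U) \<le> Re (beta (U + s *\<^sub>R A + c *\<^sub>R B) (U + s *\<^sub>R A + c *\<^sub>R B))"
      using Dpos by (simp add: divide_right_mono_neg divide_le_cancel)
    hence "0 \<le> g t" unfolding beta_quad g_def s_def c_def by simp
    thus ?thesis by (simp add: g_def)
  qed
  have "(g has_real_derivative 2 * Re (beta A U)) (at 0)"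
    unfolding g_def
    by (rule derivative_eq_intros refl | simp)+
  hence "2 * Re (beta A U) = 0"
    by (rule DERIV_local_min[where d=1]) (use gmin in auto)
  thus ?thesis by (simp add: A_def beta_def matrix_mul_assoc)
qed


definition Xo :: "'n \<Rightarrow> 'n \<Rightarrow> complex \<Rightarrow> complex^'n^'n" where
  "Xo p q a = (\<chi> i j. (if j = q then (if i = p then a else 0) else 0) + (if j = p then (if i = q then - cnj a else 0) else 0))"

definition Xd :: "'n \<Rightarrow> complex^'n^'n" where
  "Xd p = (\<chi> i j. if j = p then (if i = p then \<i> else 0) else 0)"

lemma sum_if_delta: fixes f g :: "'n::finite \<Rightarrow> complex" shows "(\<Sum>k\<in>(UNIV::'n::finite set). (if k = q then f k else 0) * g k) = f q * g q"
  by (subst sum.cong[OF refl, of _ _ "\<lambda>k. if k = q then f k * g k else 0"]) auto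

lemma sum_if_delta2: fixes f h :: "'n::finite \<Rightarrow> complex" shows "(\<Sum>k\<in>(UNIV::'n::finite set). h k * (if k = q then f k else 0)) = h q * f q"
  by (subst sum.cong[OF refl, of _ _ "\<lambda>k. if k = q then h k * f k else 0"]) auto

lemma Xo_ct: "conj_transpose (Xo p q a) = - Xo p q a"
  by (auto simp: vec_eq_iff Xo_def)

lemma Xd_ct: "conj_transpose (Xd p) = - Xd (p::'n::finite)"
  by (auto simp: vec_eq_iff Xd_def)

lemma Xo_sq: assumes "p \<noteq> q" "a * cnj a = 1"
  shows "Xo p q a ** Xo p q a = (\<chi> i j. if j = p then (if i = p then -1 else 0) else 0) + (\<chi> i j. if j = q then (if i = q then -1 else 0) else 0)"
  using assms
  by (auto simp: vec_eq_iff Xo_def matrix_matrix_mult_def distrib_left distrib_right sum.distrib sum_if_delta sum_if_delta2 mult.commute)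


lemma Xo_cube: assumes "p \<noteq> q" "a * cnj a = 1"
  shows "Xo p q a ** Xo p q a ** Xo p q a = - Xo (p::'n::finite) q a"
  unfolding Xo_sq[OF assms] using assms
  by (auto simp: vec_eq_iff Xo_def matrix_matrix_mult_def distrib_left distrib_right sum.distrib sum_if_delta sum_if_delta2 mult.commute)

lemma Xd_cube: "Xd p ** Xd p ** Xd p = - Xd (p::'n::finite)"
proof -
  have sq: "Xd p ** Xd p = (\<chi> i j. if j = p then (if i = p then -1 else 0) else 0)"
    by (auto simp: vec_eq_iff Xd_def matrix_matrix_mult_def sum_if_delta sum_if_delta2)
  show ?thesis unfolding sq
    by (auto simp: vec_eq_iff Xd_def matrix_matrix_mult_def sum_if_delta sum_if_delta2)
qed

lemma Xo_trace: "trace (Xo p q a ** W) = a * W $ q $ p - cnj a * W $ p $ q"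
  for W :: "complex^'n::finite^'n"
  by (simp add: trace_def Xo_def matrix_matrix_mult_def distrib_right sum.distrib sum_if_delta sum_if_delta2)

lemma Xd_trace: "trace (Xd p ** W) = \<i> * W $ p $ p"
  for W :: "complex^'n::finite^'n"
  by (simp add: trace_def Xd_def matrix_matrix_mult_def sum_if_delta sum_if_delta2)


theorem proposition9:
  fixes U :: "complex^('a::finite \<times> 'b::finite)^('a \<times> 'b)"
  assumes "odd CARD('a)"
    and "unitary_mat U"
    and "\<forall>V :: complex^('a \<times> 'b)^('a \<times> 'b). unitary_mat V \<longrightarrow> objective U \<le> objective V"
  shows "hermitian_mat (U ** partial_transpose2 (entry_conj U))"
proof -
  define W where "W = U ** partial_transpose2 (entry_conj U)"
  have cr: "Re (trace (X ** W)) = 0" if "conj_transpose X = - X" "X ** X ** X = - X" for X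
    using crit[OF assms(2) assms(3) that] by (simp add: W_def)
  have "cnj (W $ j $ i) = W $ i $ j" for i j
  proof (cases "i = j")
    case True
    have "Re (trace (Xd i ** W)) = 0" by (rule cr[OF Xd_ct Xd_cube])
    hence "Im (W $ i $ i) = 0" by (simp add: Xd_trace)
    thus ?thesis using True by (simp add: complex_eq_iff)
  next
    case False
    hence ne: "j \<noteq> i" by simp
    have "Re (trace (Xo j i 1 ** W)) = 0" by (rule cr[OF Xo_ct Xo_cube[OF ne]]) simp
    hence 1: "Re (W $ i $ j) = Re (W $ j $ i)" by (simp add: Xo_trace)
    have "Re (trace (Xo j i \<i> ** W)) = 0" by (rule cr[OF Xo_ct Xo_cube[OF ne]]) simp
    hence 2: "Im (W $ i $ j) = - Im (W $ j $ i)" by (simp add: Xo_trace)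
    show ?thesis using 1 2 by (simp add: complex_eq_iff)
  qed
  thus ?thesis unfolding hermitian_mat_def W_def[symmetric] by (simp add: vec_eq_iff)
qed

end
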